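(* Let $m,n\ge 1$ and let $k>0$ and $l$ be fixed integers. Let $P,Q$ be constant $n\times n$ complex matrices, let $\mathfrak{R}(P)$ be a finite set of distinct invertible constant $n\times n$ matrices $\Lambda$ with $-(\Lambda^{k}+\Lambda^{k-l})=P$, and let $\mathfrak{R}(Q)$ be a finite set of distinct invertible constant $n\times n$ matrices $\tilde\Lambda$ with $-(\tilde\Lambda^{k}+\tilde\Lambda^{k-l})=Q$. For each $\Lambda\in\mathfrak{R}(P)$ let $A_\Lambda$ be a constant $m\times n$ matrix, for each $\tilde\Lambda\in\mathfrak{R}(Q)$ let $B_{\tilde\Lambda}$ be a constant $n\times m$ matrix, and for each pair let $X_{\tilde\Lambda,\Lambda}$ be a constant $n\times n$ matrix satisfying $\tilde\Lambda^{-l}X_{\tilde\Lambda,\Lambda}\Lambda^{l}-X_{\tilde\Lambda,\Lambda}=B_{\tilde\Lambda}A_\Lambda$. Let $\tilde\omega=\tilde\omega(t)$ be a differentiable $n\times n$ matrix function of $t$ only, satisfying $Q\,\tilde\omega=\tilde\omega\,P$, and set $\gamma_2=-\tilde\omega_t$. Define $$\theta=\sum_{\Lambda\in\mathfrak{R}(P)}A_\Lambda e^{\Lambda^l t}\Lambda^j,\qquad \eta=\sum_{\tilde\Lambda\in\mathfrak{R}(Q)}e^{-\tilde\Lambda^l t}\tilde\Lambda^{-j}B_{\tilde\Lambda},$$ $$\tilde\Omega=\sum_{\Lambda\in\mathfrak{R}(P),\,\tilde\Lambda\in\mathfrak{R}(Q)}e^{-\tilde\Lambda^l t}\tilde\Lambda^{-j}X_{\tilde\Lambda,\Lambda}e^{\Lambda^l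 t}\Lambda^j+\tilde\omega,$$ and assume $\tilde\Omega$ is invertible. Let $g_0$ be a constant invertible $m\times m$ matrix. Then $$g=(I-\theta\,\tilde\Omega_{(l)}^{-1}\eta)\,g_0,\qquad \hat q=\theta\,\tilde\Omega_{(l)}^{-1}\gamma_2,\qquad \tilde r=\tilde\Omega^{-1}\eta$$ solve the system $$(g\,g_{(k)}^{-1})_t+(g\,g_{(l)}^{-1})_{(k-l)}-g\,g_{(l)}^{-1}=(\hat q_{(-l)}\tilde r)_{(l)}-(\hat q_{(-l)}\tilde r)_{(k)},$$ $$\hat q_{(k-l)}+\hat q\,P+g\,g_{(k)}^{-1}\hat q_{(k)}=0,\qquad \tilde r_{(l-k)}+P\,\tilde r+(\tilde r\,g)_{(-k)}\,g^{-1}=0$$ (wherever the expressions are defined, in particular where $g$ is invertible).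
   Context: All dependent variables are matrix-valued functions of a continuous variable $t$ and a discrete variable $j\in\mathbb{Z}$; subscript $t$ denotes the derivative with respect to $t$, and for an integer $s$, $f_{(s)}(t,j)=f(t,j+s)$ denotes the shifted function. $I$ denotes the identity matrix. *)

theory Defs
  imports "HOL-Analysis.Analysis"
begin

fun matpow :: "'a::semiring_1^'n^'n \<Rightarrow> nat \<Rightarrow> 'a^'n^'n" where
  "matpow A 0 = mat 1"
| "matpow A (Suc i) = A ** matpow A i"

definition mzpow :: "'a::semiring_1^'n^'n \<Rightarrow> int \<Rightarrow> 'a^'n^'n" where
  "mzpow A z = (if 0 \<le> z then matpow A (nat z) else matpow (matrix_inv A) (nat (- z)))"

definition mexp :: "complex^'n^'n \<Rightarrow> complex^'n^'n" where
  "mexp M = (\<Sum>i. (1 / fact i) *\<^sub>R matpow M i)"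

end

theory Submission
  imports Defs
begin

lemma mm_add_r: "((A::'a::semiring_1^'n^'m) + B) ** C = A ** C + B ** C"
  by (vector matrix_matrix_mult_def sum.distrib[symmetric] field_simps)
lemma mm_diff_l: "(A::'a::ring_1^'n^'m) ** (B - C) = A ** B - A ** C"
  by (vector matrix_matrix_mult_def sum_subtractf[symmetric] field_simps)
lemma mm_diff_r: "((A::'a::ring_1^'n^'m) - B) ** C = A ** C - B ** C"
  by (vector matrix_matrix_mult_def sum_subtractf[symmetric] field_simps)
lemma mm_neg_l: "(- (A::'a::ring_1^'n^'m)) ** C = - (A ** C)"
  by (vector matrix_matrix_mult_def sum_negf[symmetric])
lemma mm_neg_r: "(A::'a::ring_1^'n^'m) ** (- C) = - (A ** C)"
  by (vector matrix_matrix_mult_def sum_negf[symmetric])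
lemma mm_sum_l: "(\<Sum>x\<in>S. f x) ** (C::'a::semiring_1^'p^'n) = (\<Sum>x\<in>S. f x ** C)"
  by (induction S rule: infinite_finite_induct) (auto simp: mm_add_r)
lemma mm_sum_r: "(C::'a::semiring_1^'n^'m) ** (\<Sum>x\<in>S. f x) = (\<Sum>x\<in>S. C ** f x)"
  by (induction S rule: infinite_finite_induct) (auto simp: matrix_add_ldistrib)

lemmas mmd = matrix_add_ldistrib mm_add_r mm_diff_l mm_diff_r mm_neg_l mm_neg_r matrix_mul_assoc

lemma inv_r: "invertible (A::'a::field^'n^'n) \<Longrightarrow> A ** matrix_inv A = mat 1"
  by (metis (mono_tags, lifting) invertible_def matrix_inv_def someI_ex)
lemma inv_l: "invertible (A::'a::field^'n^'n) \<Longrightarrow> matrix_inv A ** A = mat 1"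
  by (metis (mono_tags, lifting) invertible_def matrix_inv_def someI_ex)
lemma inv_unique: "(A::'a::field^'n^'n) ** B = mat 1 \<Longrightarrow> matrix_inv A = B"
proof -
  assume h: "A ** B = mat 1"
  then have h2: "B ** A = mat 1" using matrix_left_right_inverse by blast
  then have "invertible A" using h invertible_def by blast
  then have "matrix_inv A = matrix_inv A ** (A ** B)" by (simp add: h)
  also have "\<dots> = B" by (simp add: matrix_mul_assoc inv_l \<open>invertible A\<close>)
  finally show ?thesis .
qed
lemma inv_mult: "invertible (A::'a::field^'n^'n) \<Longrightarrow> invertible (B::'a^'n^'n) \<Longrightarrow>
   matrix_inv (A ** B) = matrix_inv B ** matrix_inv A"
proof (rule inv_unique)
  assume a: "invertible A" "invertible B"
  have "A ** B ** (matrix_inv B ** matrix_inv A) = A ** (B ** matrix_inv B) ** matrix_inv A"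
    by (simp add: matrix_mul_assoc)
  then show "A ** B ** (matrix_inv B ** matrix_inv A) = mat 1" by (simp add: inv_r a)
qed
lemma invertible_inv: "invertible (A::'a::field^'n^'n) \<Longrightarrow> invertible (matrix_inv A)"
  using inv_l inv_r invertible_def by blast

lemma mzpow_succ:
  assumes L: "invertible (L::'a::field^'n^'n)"
  shows "mzpow L (z + 1) = L ** mzpow L z"
proof (cases "0 \<le> z")
  case True
  then have "nat (z+1) = Suc (nat z)" by simp
  then show ?thesis using True by (simp add: mzpow_def)
next
  case False
  show ?thesis
  proof (cases "z = -1")
    case True
    then show ?thesis by (simp add: mzpow_def inv_r L)
  next
    case False2: False
    then have z: "z + 1 < 0" using False by simp
    then have "nat (- z) = Suc (nat (- (z+1)))" by simp
    then have "mzpow L z = matrix_inv L ** mzpow L (z+1)" using z False by (simp add: mzpow_def)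
    then have "L ** mzpow L z = (L ** matrix_inv L) ** mzpow L (z+1)" by (simp add: matrix_mul_assoc)
    then show ?thesis by (simp add: inv_r L)
  qed
qed

lemma mzpow_pred:
  assumes L: "invertible (L::'a::field^'n^'n)"
  shows "mzpow L (z - 1) = matrix_inv L ** mzpow L z"
proof -
  have "mzpow L z = L ** mzpow L (z - 1)" using mzpow_succ[OF L, of "z-1"] by simp
  then have "matrix_inv L ** mzpow L z = (matrix_inv L ** L) ** mzpow L (z - 1)" by (simp add: matrix_mul_assoc)
  then show ?thesis by (simp add: inv_l L)
qed

lemma mzpow_0[simp]: "mzpow L 0 = mat 1" by (simp add: mzpow_def)

lemma mzpow_add:
  assumes L: "invertible (L::'a::field^'n^'n)"
  shows "mzpow L a ** mzpow L b = mzpow L (a + b)"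
proof (induction a rule: int_induct[where k=0])
  case base then show ?case by simp
next
  case (step1 i)
  have "mzpow L (i + 1) ** mzpow L b = L ** (mzpow L i ** mzpow L b)"
    by (simp add: mzpow_succ[OF L] matrix_mul_assoc)
  also have "\<dots> = L ** mzpow L (i + b)" using step1 by simp
  also have "\<dots> = mzpow L (i + b + 1)" by (simp add: mzpow_succ[OF L])
  finally show ?case by (simp add: algebra_simps)
next
  case (step2 i)
  have "mzpow L (i - 1) ** mzpow L b = matrix_inv L ** (mzpow L i ** mzpow L b)"
    by (simp add: mzpow_pred[OF L] matrix_mul_assoc)
  also have "\<dots> = matrix_inv L ** mzpow L (i + b)" using step2 by simp
  also have "\<dots> = mzpow L (i + b - 1)" by (simp add: mzpow_pred[OF L])
  finally show ?case by (simp add: algebra_simps)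
qed

lemma mzpow_comm:
  assumes L: "invertible (L::'a::field^'n^'n)"
  shows "mzpow L a ** mzpow L b = mzpow L b ** mzpow L a"
  by (simp add: mzpow_add[OF L] add.commute)

lemma mzpow_1: "invertible L \<Longrightarrow> mzpow (L::'a::field^'n^'n) 1 = L"
  using mzpow_succ[of L 0] by simp

lemma bb_mm: "bounded_bilinear ((**) :: complex^'n^'m \<Rightarrow> complex^'p^'n \<Rightarrow> complex^'p^'m)"
proof -
  have "bilinear ((**) :: complex^'n^'m \<Rightarrow> complex^'p^'n \<Rightarrow> complex^'p^'m)"
    unfolding bilinear_def
    by (auto intro!: linearI simp: matrix_add_ldistrib mm_add_r matrix_scalar_ac scalar_matrix_assoc)
  then show ?thesis by (simp add: bilinear_conv_bounded_bilinear)
qed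

lemma matpow_scaleR: "matpow (x *\<^sub>R (M::complex^'n^'n)) i = (x ^ i) *\<^sub>R matpow M i"
  by (induction i) (auto simp: matrix_scalar_ac scalar_matrix_assoc[symmetric])

lemma matpow_comm: "N ** M = M ** N \<Longrightarrow> N ** matpow (M::'a::semiring_1^'n^'n) i = matpow M i ** N"
proof (induction i)
  case 0 then show ?case by simp
next
  case (Suc i)
  have "N ** matpow M (Suc i) = (N ** M) ** matpow M i" by (simp add: matrix_mul_assoc)
  also have "\<dots> = M ** (N ** matpow M i)" using Suc.prems by (simp add: matrix_mul_assoc)
  also have "\<dots> = matpow M (Suc i) ** N" using Suc by (simp add: matrix_mul_assoc)
  finally show ?case .
qed

lemma matpow_Suc_right: "matpow (M::'a::semiring_1^'n^'n) (Suc i) = matpow M i ** M"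
  using matpow_comm[of M M i] by simp

lemma KK_ex: "\<exists>K. 0 < K \<and> (\<forall>A B. norm ((A::complex^'n^'n) ** (B::complex^'n^'n)) \<le> norm A * norm B * K)"
  using bounded_bilinear.pos_bounded[OF bb_mm] by blast

lemma norm_matpow:
  assumes K: "\<And>A B. norm ((A::complex^'n^'n) ** (B::complex^'n^'n)) \<le> norm A * norm B * K" "0 < K"
  shows "norm (matpow (M::complex^'n^'n) i) \<le> norm (mat 1 :: complex^'n^'n) * (K * norm M) ^ i"
proof (induction i)
  case 0 then show ?case by simp
next
  case (Suc i)
  have "norm (matpow M (Suc i)) \<le> norm M * norm (matpow M i) * K" using K(1)[of M "matpow M i"] by simp
  also have "\<dots> \<le> norm M * (norm (mat 1 :: complex^'n^'n) * (K * norm M) ^ i) * K"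
    using Suc K(2) by (intro mult_right_mono mult_left_mono) auto
  finally show ?case by (simp add: algebra_simps)
qed

abbreviation "eterm M x i \<equiv> (x ^ i / fact i) *\<^sub>R matpow (M::complex^'n^'n) i"

lemma eterm_bound:
  assumes K: "\<And>A B. norm ((A::complex^'n^'n) ** (B::complex^'n^'n)) \<le> norm A * norm B * K" "0 < K"
  assumes "\<bar>x\<bar> \<le> R"
  shows "norm (eterm (M::complex^'n^'n) x i) \<le> norm (mat 1 :: complex^'n^'n) * (inverse (fact i) * (R * (K * norm M)) ^ i)"
proof -
  have "norm (eterm M x i) = (\<bar>x\<bar> ^ i / fact i) * norm (matpow M i)" by (simp add: power_abs)
  also have "\<dots> \<le> (R ^ i / fact i) * (norm (mat 1 :: complex^'n^'n) * (K * norm M) ^ i)"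
    apply (intro mult_mono divide_right_mono power_mono)
    using assms norm_matpow[OF K(1,2), of M i] by auto
  finally show ?thesis by (simp add: power_mult_distrib field_simps)
qed

lemma summable_bound: "summable (\<lambda>i. norm (mat 1 :: complex^'n^'n) * (inverse (fact i) * (c::real) ^ i))"
  by (intro summable_mult summable_exp)

lemma eterm_summable: "summable (eterm (M::complex^'n^'n) x)"
proof -
  obtain K where K: "\<And>A B. norm ((A::complex^'n^'n) ** (B::complex^'n^'n)) \<le> norm A * norm B * K" "0 < K"
    using KK_ex by blast
  show ?thesis
  apply (rule summable_comparison_test'[OF summable_bound, of 0])
  using eterm_bound[OF K, where x=x and R="\<bar>x\<bar>" and M=M] by auto
qed

lemma mexp_eq: "mexp (x *\<^sub>R (M::complex^'n^'n)) = (\<Sum>i. eterm M x i)"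
  unfolding mexp_def matpow_scaleR by (simp add: divide_inverse mult.commute)

lemma mexp_comm:
  assumes "N ** M = M ** N"
  shows "N ** mexp (x *\<^sub>R M) = mexp (x *\<^sub>R M) ** N"
proof -
  have s: "summable (eterm M x)" by (rule eterm_summable)
  have "N ** mexp (x *\<^sub>R M) = (\<Sum>i. N ** eterm M x i)"
    unfolding mexp_eq by (rule bounded_linear.suminf[OF bounded_bilinear.bounded_linear_right[OF bb_mm] s])
  also have "\<dots> = (\<Sum>i. eterm M x i ** N)"
    by (simp add: matrix_scalar_ac scalar_matrix_assoc[symmetric] matpow_comm[OF assms])
  also have "\<dots> = mexp (x *\<^sub>R M) ** N"
    unfolding mexp_eq by (rule bounded_linear.suminf[OF bounded_bilinear.bounded_linear_left[OF bb_mm] s, symmetric])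
  finally show ?thesis .
qed

lemma mexp_deriv:
  fixes M :: "complex^'n^'n"
  shows "((\<lambda>x. mexp (x *\<^sub>R M)) has_vector_derivative (M ** mexp (t *\<^sub>R M))) (at t)"
proof -
  obtain K where K: "\<And>A B. norm ((A::complex^'n^'n) ** (B::complex^'n^'n)) \<le> norm A * norm B * K" "0 < K"
    using KK_ex by blast
  define S where "S = ball t 1"
  define f where "f = (\<lambda>n x. eterm M x n)"
  define D where "D = (\<lambda>n (x::real). (of_nat n * x ^ (n - 1) / fact n) *\<^sub>R matpow M n)"
  define E where "E = (\<lambda>x. mexp (x *\<^sub>R M))"
  have der: "(f n has_derivative (\<lambda>h. h *\<^sub>R D n x)) (at x within S)" for n x
  proof -
    have "((\<lambda>x. x ^ n / fact n) has_real_derivative (of_nat n * x ^ (n - 1) / fact n)) (at x within S)"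
      by (auto intro!: derivative_eq_intros)
    from has_vector_derivative_scaleR[OF this has_vector_derivative_const[of "matpow M n"]]
    show ?thesis unfolding f_def D_def has_vector_derivative_def by simp
  qed
  have Esum: "(\<lambda>n. f n x) sums E x" for x
    unfolding f_def E_def mexp_eq using eterm_summable summable_sums by blast
  have Dsum: "(\<Sum>i<Suc n. D i x) = M ** (\<Sum>i<n. f i x)" for n x
  proof -
    have "(\<Sum>i<Suc n. D i x) = D 0 x + (\<Sum>i<n. D (Suc i) x)" by (rule sum.lessThan_Suc_shift)
    also have "\<dots> = (\<Sum>i<n. M ** f i x)"
      by (simp add: D_def f_def matrix_scalar_ac scalar_matrix_assoc[symmetric] fact_Suc field_simps del: of_nat_Suc)
    also have "\<dots> = M ** (\<Sum>i<n. f i x)" by (simp add: mm_sum_r)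
    finally show ?thesis .
  qed
  have unif: "uniform_limit S (\<lambda>n x. \<Sum>i<n. f i x) E sequentially"
  proof -
    have "uniform_limit S (\<lambda>n x. \<Sum>i<n. f i x) (\<lambda>x. suminf (\<lambda>i. f i x)) sequentially"
    proof (rule Weierstrass_m_test)
      fix n x assume "x \<in> S"
      then have "\<bar>x\<bar> \<le> \<bar>t\<bar> + 1" unfolding S_def by (auto simp: dist_real_def)
      then show "norm (f n x) \<le> norm (mat 1 :: complex^'n^'n) * (inverse (fact n) * ((\<bar>t\<bar> + 1) * (K * norm M)) ^ n)"
        unfolding f_def by (rule eterm_bound[OF K])
    qed (rule summable_bound)
    moreover have "(\<lambda>x. suminf (\<lambda>i. f i x)) = E" using sums_unique[OF Esum] by (simp add: fun_eq_iff)
    ultimately show ?thesis by simp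
  qed
  have main: "\<exists>g. \<forall>x\<in>S. (\<lambda>n. f n x) sums g x \<and> (g has_derivative (\<lambda>h. h *\<^sub>R (M ** E x))) (at x within S)"
  proof (rule has_derivative_series[where f' = "\<lambda>n x h. h *\<^sub>R D n x"])
    show "convex S" unfolding S_def by simp
    show "t \<in> S" unfolding S_def by simp
    show "(\<lambda>n. f n t) sums E t" by (rule Esum)
    show "\<And>n x. x \<in> S \<Longrightarrow> (f n has_derivative (\<lambda>h. h *\<^sub>R D n x)) (at x within S)" by (rule der)
    fix e :: real assume e: "e > 0"
    define e' where "e' = e / (norm M * K + 1)"
    have e': "e' > 0" unfolding e'_def using e K(2) by (simp add: add_nonneg_pos)
    have ev: "\<forall>\<^sub>F n in sequentially. \<forall>x\<in>S. dist (\<Sum>i<n. f i x) (E x) < e'"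
      by (rule uniform_limitD[OF unif e'])
    then have "\<forall>\<^sub>F n in sequentially. \<forall>x\<in>S. \<forall>h. norm ((\<Sum>i<Suc n. h *\<^sub>R D i x) - h *\<^sub>R (M ** E x)) \<le> e * norm h"
    proof eventually_elim
      case (elim n)
      show ?case
      proof (intro ballI allI)
        fix x h assume x: "x \<in> S"
        have "(\<Sum>i<Suc n. h *\<^sub>R D i x) - h *\<^sub>R (M ** E x) = h *\<^sub>R (M ** ((\<Sum>i<n. f i x) - E x))"
          by (simp only: scaleR_sum_right[symmetric] Dsum mm_diff_l scaleR_diff_right)
        then have "norm ((\<Sum>i<Suc n. h *\<^sub>R D i x) - h *\<^sub>R (M ** E x)) = \<bar>h\<bar> * norm (M ** ((\<Sum>i<n. f i x) - E x))"
          by simp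
        also have "\<dots> \<le> \<bar>h\<bar> * (norm M * norm ((\<Sum>i<n. f i x) - E x) * K)"
          by (intro mult_left_mono K(1)) auto
        also have "\<dots> \<le> \<bar>h\<bar> * (norm M * e' * K)"
          using elim x K(2) by (intro mult_left_mono mult_right_mono) (auto simp: dist_norm)
        also have "\<dots> \<le> \<bar>h\<bar> * e"
        proof -
          have "norm M * e' * K = e * (norm M * K / (norm M * K + 1))" unfolding e'_def by (simp add: field_simps)
          also have "\<dots> \<le> e * 1" using e K(2) by (intro mult_left_mono) (auto simp: divide_le_eq add_nonneg_pos)
          finally show ?thesis by (intro mult_left_mono) auto
        qed
        finally show "norm ((\<Sum>i<Suc n. h *\<^sub>R D i x) - h *\<^sub>R (M ** E x)) \<le> e * norm h" by (simp add: mult.commute)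
      qed
    qed
    then show "\<forall>\<^sub>F n in sequentially. \<forall>x\<in>S. \<forall>h. norm ((\<Sum>i<n. h *\<^sub>R D i x) - h *\<^sub>R (M ** E x)) \<le> e * norm h"
      by (subst eventually_sequentially_Suc[symmetric])
  qed
  then obtain g where g: "\<And>x. x \<in> S \<Longrightarrow> (\<lambda>n. f n x) sums g x \<and> (g has_derivative (\<lambda>h. h *\<^sub>R (M ** E x))) (at x within S)"
    by blast
  have tS: "t \<in> S" "open S" unfolding S_def by auto
  have "(g has_derivative (\<lambda>h. h *\<^sub>R (M ** E t))) (at t)"
    using g[OF tS(1)] at_within_open[OF tS] by simp
  moreover have "\<And>x. x \<in> S \<Longrightarrow> g x = E x" using g Esum sums_unique2 by blast
  ultimately have "(E has_derivative (\<lambda>h. h *\<^sub>R (M ** E t))) (at t)"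
    by (rule has_derivative_transform_within_open[OF _ tS(2) tS(1)])
  then show ?thesis unfolding has_vector_derivative_def E_def .
qed

lemma inv_entry:
  fixes A :: "'a::field^'n^'n"
  assumes "invertible A"
  shows "matrix_inv A $ i $ j = det ((\<chi> a b. if b = i then (if a = j then 1 else 0) else A$a$b)::'a^'n^'n) / det A"
proof -
  have d: "det A \<noteq> 0" using assms invertible_det_nz by blast
  let ?b = "(\<chi> i. if i = j then 1 else 0) :: 'a^'n"
  have "A *v (matrix_inv A *v ?b) = ?b"
    by (simp add: matrix_vector_mul_assoc inv_r assms)
  then have 1: "matrix_inv A *v ?b = (\<chi> k. det((\<chi> a b. if b=k then ?b$a else A$a$b)::'a^'n^'n) / det A)"
    using cramer[OF d] by blast
  have 2: "(matrix_inv A *v ?b) $ i = matrix_inv A $ i $ j"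
    by (simp add: matrix_vector_mult_def if_distrib if_distribR cong: if_cong)
  have 3: "((\<chi> a b. if b = i then ?b$a else A$a$b)::'a^'n^'n) = ((\<chi> a b. if b = i then (if a = j then 1 else 0) else A$a$b)::'a^'n^'n)"
    by (simp add: vec_eq_iff)
  have "matrix_inv A $ i $ j = (matrix_inv A *v ?b) $ i" using 2 by simp
  also have "\<dots> = det((\<chi> a b. if b=i then ?b$a else A$a$b)::'a^'n^'n) / det A"
    unfolding 1 by (rule vec_lambda_beta)
  also have "\<dots> = det ((\<chi> a b. if b = i then (if a = j then 1 else 0) else A$a$b)::'a^'n^'n) / det A"
    unfolding 3 ..
  finally show ?thesis .
qed

lemma det_tendsto:
  fixes M :: "'b \<Rightarrow> 'a::{real_normed_field}^'n^'n"
  assumes "\<And>i j. ((\<lambda>s. M s $ i $ j) \<longlongrightarrow> M0 $ i $ j) F"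
  shows "((\<lambda>s. det (M s)) \<longlongrightarrow> det M0) F"
  unfolding det_def
  by (intro tendsto_intros assms)

lemma inv_tendsto:
  fixes M :: "'b \<Rightarrow> complex^'n^'n"
  assumes lim: "(M \<longlongrightarrow> M0) F" and inv: "\<And>s. invertible (M s)" and inv0: "invertible M0"
  shows "((\<lambda>s. matrix_inv (M s)) \<longlongrightarrow> matrix_inv M0) F"
proof (rule vec_tendstoI, rule vec_tendstoI)
  fix i j
  have e: "((\<lambda>s. M s $ a $ b) \<longlongrightarrow> M0 $ a $ b) F" for a b
    by (intro tendsto_vec_nth lim)
  have e2: "((\<lambda>s. ((\<chi> a b. if b = i then (if a = j then 1 else 0) else M s$a$b)::complex^'n^'n) $ a' $ b') \<longlongrightarrow>
       ((\<chi> a b. if b = i then (if a = j then 1 else 0) else M0$a$b)::complex^'n^'n) $ a' $ b') F" for a' b'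
    by (cases "b' = i") (simp_all add: e)
  have "((\<lambda>s. det ((\<chi> a b. if b = i then (if a = j then 1 else 0) else M s$a$b)::complex^'n^'n) / det (M s)) \<longlongrightarrow>
        det ((\<chi> a b. if b = i then (if a = j then 1 else 0) else M0$a$b)::complex^'n^'n) / det M0) F"
    apply (rule tendsto_divide)
      apply (rule det_tendsto[OF e2])
     apply (rule det_tendsto[OF e])
    using inv0 invertible_det_nz by blast
  then show "((\<lambda>s. matrix_inv (M s) $ i $ j) \<longlongrightarrow> matrix_inv M0 $ i $ j) F"
    by (simp add: inv_entry inv inv0)
qed

lemma inv_deriv:
  fixes M :: "real \<Rightarrow> complex^'n^'n"
  assumes d: "(M has_vector_derivative M') (at t)" and inv: "\<And>s. invertible (M s)"
  shows "((\<lambda>s. matrix_inv (M s)) has_vector_derivative (- (matrix_inv (M t) ** M' ** matrix_inv (M t)))) (at t)"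
proof -
  define N where "N = (\<lambda>s. matrix_inv (M s))"
  define N0 where "N0 = N t"
  define D where "D = - (N0 ** M' ** N0)"
  define Q where "Q = (\<lambda>y. ((M y - M t) - (y - t) *\<^sub>R M') /\<^sub>R norm (y - t))"
  have bb: "bounded_bilinear ((**) :: complex^'n^'n \<Rightarrow> complex^'n^'n \<Rightarrow> complex^'n^'n)" by (rule bb_mm)
  have Q0: "(Q \<longlongrightarrow> 0) (at t)"
    using d unfolding has_vector_derivative_def has_derivative_at_within Q_def by simp
  have Mc: "(M \<longlongrightarrow> M t) (at t)"
    using has_vector_derivative_continuous[OF d] by (simp add: continuous_within)
  have Nc: "(N \<longlongrightarrow> N0) (at t)"
    unfolding N_def N0_def by (rule inv_tendsto[OF Mc inv inv])
  have key: "N y - N0 = - (N y ** (M y - M t) ** N0)" for y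
  proof -
    have "N y ** (M y - M t) ** N0 = (N y ** M y) ** N0 - N y ** (M t ** N0)"
      by (simp add: mmd)
    also have "\<dots> = N0 - N y" by (simp add: N_def N0_def inv_l inv_r inv)
    finally show ?thesis by simp
  qed
  have split: "((N y - N0) - (y - t) *\<^sub>R D) /\<^sub>R norm (y - t) =
      - (N y ** Q y ** N0) - ((y - t) / norm (y - t)) *\<^sub>R ((N y - N0) ** M' ** N0)" for y
  proof -
    have "(N y - N0) - (y - t) *\<^sub>R D = - (N y ** ((M y - M t) - (y - t) *\<^sub>R M') ** N0) - (y - t) *\<^sub>R ((N y - N0) ** M' ** N0)"
    proof -
      have "(N y - N0) - (y - t) *\<^sub>R D = - (N y ** (M y - M t) ** N0) - (y - t) *\<^sub>R D"
        by (simp only: key)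
      also have "\<dots> = - (N y ** ((M y - M t) - (y - t) *\<^sub>R M') ** N0) - (y - t) *\<^sub>R ((N y - N0) ** M' ** N0)"
        unfolding D_def by (simp add: mmd matrix_scalar_ac scalar_matrix_assoc[symmetric] algebra_simps)
      finally show ?thesis .
    qed
    moreover have "N y ** Q y ** N0 = inverse (norm (y - t)) *\<^sub>R (N y ** ((M y - M t) - (y - t) *\<^sub>R M') ** N0)"
      unfolding Q_def by (simp only: matrix_scalar_ac scalar_matrix_assoc[symmetric])
    ultimately show ?thesis
      by (simp add: scaleR_diff_right divide_inverse mult.commute)
  qed
  have t1: "((\<lambda>y. N y ** Q y ** N0) \<longlongrightarrow> 0) (at t)"
    using bounded_bilinear.tendsto[OF bb bounded_bilinear.tendsto[OF bb Nc Q0] tendsto_const[of N0]] by simp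
  have t2a: "((\<lambda>y. (N y - N0) ** M' ** N0) \<longlongrightarrow> 0) (at t)"
  proof -
    have "((\<lambda>y. N y - N0) \<longlongrightarrow> 0) (at t)" using Nc by (simp add: tendsto_diff[OF Nc tendsto_const[of N0], simplified])
    from bounded_bilinear.tendsto[OF bb bounded_bilinear.tendsto[OF bb this tendsto_const[of M']] tendsto_const[of N0]]
    show ?thesis by simp
  qed
  have t2: "((\<lambda>y. ((y - t) / norm (y - t)) *\<^sub>R ((N y - N0) ** M' ** N0)) \<longlongrightarrow> 0) (at t)"
  proof (rule Lim_null_comparison[OF _ tendsto_norm_zero[OF t2a]])
    show "\<forall>\<^sub>F y in at t. norm (((y - t) / norm (y - t)) *\<^sub>R ((N y - N0) ** M' ** N0)) \<le> norm ((N y - N0) ** M' ** N0)"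
      by (intro always_eventually allI) (case_tac "y = t", simp_all)
  qed
  have "((\<lambda>y. ((N y - N0) - (y - t) *\<^sub>R D) /\<^sub>R norm (y - t)) \<longlongrightarrow> 0) (at t)"
    unfolding split using tendsto_diff[OF tendsto_minus[OF t1] t2] by simp
  then have "(N has_derivative (\<lambda>h. h *\<^sub>R D)) (at t)"
    unfolding has_derivative_at_within by (simp add: N0_def bounded_linear_scaleR_left)
  then show ?thesis unfolding has_vector_derivative_def N_def D_def N0_def .
qed

lemma grp1: "(y::'a::ab_group_add) = - c - a \<Longrightarrow> y = p + z \<Longrightarrow> a + c = - (p + z)"
  by (metis add.commute minus_add_distrib minus_minus diff_conv_add_uminus)
lemma grp2: "(a::'a::ab_group_add) + c = - (p + z) \<Longrightarrow> a + p + (c + z) = 0"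
proof -
  assume h: "a + c = - (p + z)"
  have "a + p + (c + z) = (a + c) + (p + z)" by (simp add: algebra_simps)
  also have "\<dots> = 0" using h by simp
  finally show ?thesis .
qed
lemma grp4: "u + v + (w::'a::ab_group_add) = 0 \<Longrightarrow> u = - v - w"
  by (metis add.commute add_diff_cancel diff_conv_add_uminus minus_add_distrib add.assoc diff_0)
lemma grp5: "(- a1 - a2) - (- a1 - a3) - (i + z1 - z2) + (i + z3 - (z4::'a::ab_group_add)) = (z3 + a3 - z1) - (z4 + a2 - z2)"
  by (simp add: algebra_simps)
lemma grp3: "(t::'a::ab_group_add) - (u - v) - (w - u) = t + v - w"
  by (simp add: algebra_simps)

locale core =
  fixes A :: "int \<Rightarrow> complex^'n^'m" and B :: "int \<Rightarrow> complex^'m^'n" and Om :: "int \<Rightarrow> complex^'n^'n"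
    and P Q \<gamma> :: "complex^'n^'n" and k l :: int
  assumes h1: "b = a + l \<Longrightarrow> Om b = Om a + B a ** A a"
  and h2: "b = a + k \<Longrightarrow> c = a + k - l \<Longrightarrow> A b + A c = - (A a ** P)"
  and h3: "b = a - k \<Longrightarrow> c = a - k + l \<Longrightarrow> B b + B c = - (Q ** B a)"
  and h4: "b = a + k \<Longrightarrow> c = a + k - l \<Longrightarrow> Q ** Om b = Om a ** P - B a ** A c"
  and h5: "Q ** \<gamma> = \<gamma> ** P"
  and h6: "invertible (Om a)"
begin

definition "Oi a = matrix_inv (Om a)"
definition "G a = mat 1 - A a ** Oi (a + l) ** B a"
definition "H a = mat 1 + A a ** Oi a ** B a"

lemma OO: "Om a ** Oi a = mat 1" "Oi a ** Om a = mat 1"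
  by (simp_all add: Oi_def inv_l inv_r h6)

lemma OOc: "X ** Om a ** Oi a = X" "X ** Oi a ** Om a = X"
  by (simp_all add: OO flip: matrix_mul_assoc)

lemma OOl: "Om a ** Oi a ** X = X" "Oi a ** Om a ** X = X"
  by (simp_all add: OO)

lemma BA: "b = a + l \<Longrightarrow> X ** B a ** A a = X ** Om b - X ** Om a"
  using h1[of b a] by (simp add: mmd flip: matrix_mul_assoc)

lemma GA: "b = a + l \<Longrightarrow> G a ** A a = A a ** Oi b ** Om a"
proof -
  assume b: "b = a + l"
  have "G a ** A a = A a - A a ** Oi b ** B a ** A a" by (simp add: G_def mmd b)
  also have "\<dots> = A a ** Oi b ** Om a" by (simp add: BA[OF b] OOc)
  finally show ?thesis .
qed

lemma BH: "b = a + l \<Longrightarrow> B a ** H a = Om b ** Oi a ** B a"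
proof -
  assume b: "b = a + l"
  have "B a ** H a = B a + (mat 1 ** B a ** A a) ** Oi a ** B a" by (simp add: H_def mmd)
  also have "\<dots> = Om b ** Oi a ** B a" by (simp only: BA[OF b]) (simp add: mmd OOc OOl)
  finally show ?thesis .
qed

lemma GH: "G a ** H a = mat 1"
proof -
  have "G a ** H a = H a - A a ** Oi (a + l) ** (B a ** H a)" by (simp add: G_def mmd)
  also have "\<dots> = H a - A a ** Oi a ** B a" by (simp add: BH mmd OOc)
  finally show ?thesis by (simp add: H_def)
qed

lemma HG: "H a ** G a = mat 1"
  using GH matrix_left_right_inverse by blast

lemma GHc: "X ** G a ** H a = X" "X ** H a ** G a = X"
  by (simp_all add: GH HG flip: matrix_mul_assoc)

lemma BG: "b = a + l \<Longrightarrow> B a ** G a = Om a ** Oi b ** B a"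
proof -
  assume b: "b = a + l"
  have "B a ** G a = B a - (mat 1 ** B a ** A a) ** Oi b ** B a" by (simp add: G_def mmd b)
  also have "\<dots> = Om a ** Oi b ** B a" by (simp only: BA[OF b]) (simp add: mmd OOc OOl)
  finally show ?thesis .
qed

lemma OBG: "b = a + l \<Longrightarrow> X ** Oi a ** B a ** G a = X ** Oi b ** B a"
proof -
  assume b: "b = a + l"
  have "X ** Oi a ** B a ** G a = X ** Oi a ** (B a ** G a)" by (simp add: mmd)
  also have "\<dots> = X ** Oi b ** B a" by (simp add: BG[OF b] mmd OOc)
  finally show ?thesis .
qed

lemma GAO: "b = a + l \<Longrightarrow> X ** G a ** A a ** Oi a = X ** A a ** Oi b"
proof -
  assume b: "b = a + l"
  have "X ** G a ** A a ** Oi a = X ** (G a ** A a) ** Oi a" by (simp add: mmd)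
  also have "\<dots> = X ** A a ** Oi b" by (simp add: GA[OF b] mmd OOc)
  finally show ?thesis .
qed

lemma HAO: "b = a + l \<Longrightarrow> X ** H a ** A a ** Oi b = X ** A a ** Oi a"
proof -
  assume b: "b = a + l"
  have "X ** H a ** A a ** Oi b = X ** H a ** (G a ** A a ** Oi a)" by (simp add: GAO[OF b, of "mat 1", simplified] mmd)
  also have "\<dots> = X ** A a ** Oi a" by (simp add: mmd GHc)
  finally show ?thesis .
qed

lemma QO: "d = j + k \<Longrightarrow> c = j + k - l \<Longrightarrow>
    X ** Oi j ** Q = X ** P ** Oi d - X ** Oi j ** B j ** A c ** Oi d"
proof -
  assume d: "d = j + k" and c: "c = j + k - l"
  have "X ** Oi j ** Q = X ** Oi j ** (Q ** Om d) ** Oi d" by (simp add: mmd OOc)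
  also have "\<dots> = X ** Oi j ** (Om j ** P - B j ** A c) ** Oi d" using h4[OF d c] by simp
  also have "\<dots> = X ** P ** Oi d - X ** Oi j ** B j ** A c ** Oi d" by (simp add: mmd OOc)
  finally show ?thesis .
qed

lemma AP: "d = j + k \<Longrightarrow> c = j + k - l \<Longrightarrow> X ** A j ** P = - (X ** A d) - X ** A c"
proof -
  assume d: "d = j + k" and c: "c = j + k - l"
  have "A j ** P = - (A d + A c)" using h2[OF d c] by (metis minus_minus)
  then have "X ** (A j ** P) = - (X ** A d) - X ** A c" by (simp add: matrix_add_ldistrib mm_diff_l mm_neg_r)
  then show ?thesis by (simp add: matrix_mul_assoc)
qed

lemma QB: "b = a - k \<Longrightarrow> c = a - k + l \<Longrightarrow> X ** Q ** B a = - (X ** B b) - X ** B c"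
proof -
  assume b: "b = a - k" and c: "c = a - k + l"
  have "Q ** B a = - (B b + B c)" using h3[OF b c] by (metis minus_minus)
  then have "X ** (Q ** B a) = - (X ** B b) - X ** B c" by (simp add: matrix_add_ldistrib mm_diff_l mm_neg_r)
  then show ?thesis by (simp add: matrix_mul_assoc)
qed

lemma Xg: "X ** \<gamma> ** P = X ** Q ** \<gamma>"
  by (simp add: h5 flip: matrix_mul_assoc)

lemma eq2core:
  assumes c: "c = j + k - l" and d: "d = j + k" and e: "e = j + l" and f: "f = j + k + l"
  shows "A c ** Oi d ** \<gamma> + A j ** Oi e ** \<gamma> ** P + G j ** H d ** (A d ** Oi f ** \<gamma>) = 0"
proof -
  have s1: "G j ** H d ** (A d ** Oi f ** \<gamma>) = G j ** A d ** Oi d ** \<gamma>"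
    using HAO[of f d "G j"] f d by (simp add: mmd)
  have s2: "A j ** Oi e ** \<gamma> ** P = G j ** A j ** Oi j ** Q ** \<gamma>"
    using GAO[of e j "mat 1"] e by (simp add: Xg)
  have s3: "G j ** A j ** Oi j ** Q ** \<gamma> = G j ** A j ** P ** Oi d ** \<gamma> - G j ** A j ** Oi j ** B j ** A c ** Oi d ** \<gamma>"
    using QO[OF d c, of "G j ** A j"] by (simp add: mmd)
  have s4: "G j ** A j ** P ** Oi d ** \<gamma> = - (G j ** A d ** Oi d ** \<gamma>) - G j ** A c ** Oi d ** \<gamma>"
    using AP[OF d c, of "G j"] by (simp add: mmd)
  have s5: "G j ** A c ** Oi d ** \<gamma> + G j ** A j ** Oi j ** B j ** A c ** Oi d ** \<gamma> = A c ** Oi d ** \<gamma>"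
  proof -
    have "G j ** A c ** Oi d ** \<gamma> + G j ** A j ** Oi j ** B j ** A c ** Oi d ** \<gamma> = G j ** H j ** A c ** Oi d ** \<gamma>"
      by (simp add: H_def mmd)
    then show ?thesis by (simp add: GH)
  qed
  show ?thesis unfolding s1 s2 s3 s4 using s5 by (simp add: algebra_simps)
qed

lemma Zid: "H (a + l) ** G (a + k) = mat 1 + A (a + k + l) ** Oi (a + k + l) ** B (a + k) - A (a + l) ** Oi (a + l) ** B a"
proof -
  have q: "X ** Oi (a + l) ** B (a + l) ** A (a + k) ** Oi (a + k + l) = X ** P ** Oi (a + k + l) - X ** Oi (a + l) ** Q" for X :: "complex^'n^'m"
  proof -
    have "X ** Oi (a + l) ** Q = X ** P ** Oi (a + k + l) - X ** Oi (a + l) ** B (a + l) ** A (a + k) ** Oi (a + k + l)"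
      by (rule QO) simp_all
    then show ?thesis by simp
  qed
  have qb: "A (a + l) ** Oi (a + l) ** Q ** B (a + k) = - (A (a + l) ** Oi (a + l) ** B a) - A (a + l) ** Oi (a + l) ** B (a + l)"
    by (rule QB) simp_all
  have ap: "A (a + l) ** P ** Oi (a + k + l) ** B (a + k) = - (A (a + k + l) ** Oi (a + k + l) ** B (a + k)) - A (a + k) ** Oi (a + k + l) ** B (a + k)"
  proof -
    have i1: "a + k + l = a + l + k" "a + k = a + l + k - l" by simp_all
    have "A (a + l) ** P = - (A (a + k + l) + A (a + k))" using h2[OF i1] by (metis minus_minus)
    then show ?thesis by (simp add: mmd)
  qed
  have "H (a + l) ** G (a + k) = H (a + l) - H (a + l) ** (A (a + k) ** Oi (a + k + l) ** B (a + k))"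
    by (simp add: G_def mm_diff_l)
  also have "\<dots> = mat 1 + A (a + l) ** Oi (a + l) ** B (a + l) - (A (a + k) ** Oi (a + k + l) ** B (a + k)
      + A (a + l) ** Oi (a + l) ** B (a + l) ** A (a + k) ** Oi (a + k + l) ** B (a + k))"
    by (simp only: H_def mm_add_r matrix_mul_lid matrix_mul_assoc)
  also have "\<dots> = mat 1 + A (a + l) ** Oi (a + l) ** B (a + l) - A (a + k) ** Oi (a + k + l) ** B (a + k)
      - A (a + l) ** Oi (a + l) ** B (a + l) ** A (a + k) ** Oi (a + k + l) ** B (a + k)"
    by (simp only: diff_diff_eq)
  also have "\<dots> = mat 1 + A (a + l) ** Oi (a + l) ** B (a + l) - A (a + k) ** Oi (a + k + l) ** B (a + k)
      - (A (a + l) ** P ** Oi (a + k + l) ** B (a + k) - A (a + l) ** Oi (a + l) ** Q ** B (a + k))"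
    using q[of "A (a + l)"] by (simp add: mmd)
  also have "\<dots> = mat 1 + A (a + k + l) ** Oi (a + k + l) ** B (a + k) - A (a + l) ** Oi (a + l) ** B a"
    unfolding qb ap by (simp add: algebra_simps)
  finally show ?thesis .
qed

lemma HAO0: "H a ** A a ** Oi (a + l) = A a ** Oi a"
  using HAO[OF refl, of "mat 1" a] by simp

lemma GHl: "G a ** H a ** X = X" "H a ** G a ** X = X"
  by (simp_all add: GH HG)

lemma QOm2: "c = j - k \<Longrightarrow> e = c + l \<Longrightarrow> Q ** Om j = Om e ** P + B c ** A j"
proof -
  assume c: "c = j - k" and e: "e = c + l"
  have i: "j = c + k" "j - l = c + k - l" using c by simp_all
  have "Q ** Om j = Om c ** P - B c ** A (j - l)" by (rule h4[OF i])
  moreover have "Om e = Om c + B c ** A c" by (rule h1[OF e])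
  moreover have "A c ** P = - (A j + A (j - l))" using h2[OF i] by (metis minus_minus)
  moreover have "Om e ** P = Om c ** P + B c ** (A c ** P)" using calculation(2) by (simp add: mmd)
  ultimately show ?thesis by (simp add: mmd)
qed

lemma QO2: "c = j - k \<Longrightarrow> e = c + l \<Longrightarrow> X ** Oi e ** Q = X ** P ** Oi j + X ** Oi e ** B c ** A j ** Oi j"
proof -
  assume c: "c = j - k" and e: "e = c + l"
  have "X ** Oi e ** Q = X ** Oi e ** (Q ** Om j) ** Oi j" by (simp add: mmd OOc)
  also have "\<dots> = X ** Oi e ** (Om e ** P + B c ** A j) ** Oi j" using QOm2[OF c e] by simp
  also have "\<dots> = X ** P ** Oi j + X ** Oi e ** B c ** A j ** Oi j" by (simp add: mmd OOc)
  finally show ?thesis .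
qed

lemma eq3core:
  assumes c: "c = j - k" and e: "e = c + l"
  shows "Oi e ** B e + P ** Oi j ** B j + Oi c ** B c ** G c ** H j = 0"
proof -
  have s1: "Oi c ** B c ** G c ** H j = Oi e ** B c ** H j"
    using OBG[OF e, of "mat 1"] by simp
  have s2: "Oi e ** B c ** H j = Oi e ** B c + Oi e ** B c ** A j ** Oi j ** B j"
    by (simp add: H_def mmd)
  have i: "c = j - k" "e = j - k + l" using c e by simp_all
  have s3: "Oi e ** Q ** B j = - (Oi e ** B c) - Oi e ** B e"
    by (rule QB[OF i])
  have s4: "Oi e ** Q ** B j = P ** Oi j ** B j + Oi e ** B c ** A j ** Oi j ** B j"
    using QO2[OF c e, of "mat 1"] by (simp add: mmd)
  have "Oi e ** B e + Oi e ** B c = - (P ** Oi j ** B j + Oi e ** B c ** A j ** Oi j ** B j)"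
    using grp1[OF s3 s4] .
  then show ?thesis unfolding s1 s2 by (rule grp2)
qed

definition "Omd a = B (a - l) ** A a - \<gamma>"
definition "DH b = A (b + l) ** Oi b ** B b - A b ** (Oi b ** Omd b ** Oi b) ** B b - A b ** Oi b ** B (b - l)"
definition "N b = A (b + l) ** Oi (b + l) ** B b + A b ** Oi b ** \<gamma> ** Oi (b + l) ** B b - A b ** Oi b ** B (b - l)"

lemma DHG: "DH b ** G b = N b"
proof -
  have "DH b ** G b = A (b + l) ** Oi b ** B b ** G b - A b ** Oi b ** Omd b ** Oi b ** B b ** G b - A b ** Oi b ** B (b - l) ** G b"
    by (simp add: DH_def mmd)
  also have "\<dots> = A (b + l) ** Oi (b + l) ** B b - A b ** Oi b ** Omd b ** Oi (b + l) ** B b - A b ** Oi b ** B (b - l) ** G b"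
    by (simp only: OBG[OF refl])
  also have "\<dots> = A (b + l) ** Oi (b + l) ** B b - (A b ** Oi b ** B (b - l) ** A b ** Oi (b + l) ** B b - A b ** Oi b ** \<gamma> ** Oi (b + l) ** B b)
     - (A b ** Oi b ** B (b - l) - A b ** Oi b ** B (b - l) ** A b ** Oi (b + l) ** B b)"
    by (simp add: Omd_def G_def mmd)
  also have "\<dots> = N b" unfolding grp3 N_def ..
  finally show ?thesis .
qed

lemma Zid': "a1 = a + l \<Longrightarrow> a2 = a + k \<Longrightarrow> a3 = a + k + l \<Longrightarrow>
   H a1 ** G a2 = mat 1 + A a3 ** Oi a3 ** B a2 - A a1 ** Oi a1 ** B a"
  using Zid by simp

definition "RHS1 j = A j ** Oi (j + l) ** \<gamma> ** (Oi (j + l) ** B (j + l)) - A (j + k - l) ** Oi (j + k) ** \<gamma> ** (Oi (j + k) ** B (j + k))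
   - G (j + k - l) ** H (j + k) + G j ** H (j + l)"

lemma E3c: "X ** Oi (j + l) ** B (j + l) ** G (j + k) = - (X ** P ** Oi (j + k + l) ** B (j + k)) - X ** Oi (j + l) ** B j"
proof -
  have "Oi (j + l) ** B (j + l) + P ** Oi (j + k) ** B (j + k) + Oi j ** B j ** G j ** H (j + k) = 0"
    by (rule eq3core) simp_all
  then have "X ** (Oi (j + l) ** B (j + l) + P ** Oi (j + k) ** B (j + k) + Oi j ** B j ** G j ** H (j + k)) ** G (j + k) = 0"
    by simp
  then have "X ** Oi (j + l) ** B (j + l) ** G (j + k) + X ** P ** Oi (j + k + l) ** B (j + k) + X ** Oi (j + l) ** B j = 0"
    by (simp add: mmd OBG[OF refl] GHc)
  then show ?thesis by (rule grp4)
qed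

lemma eq2H: "H j ** A (j + k - l) ** Oi (j + k) ** \<gamma> = - (A j ** Oi j ** \<gamma> ** P) - A (j + k) ** Oi (j + k) ** \<gamma>"
proof -
  have "A (j + k - l) ** Oi (j + k) ** \<gamma> + A j ** Oi (j + l) ** \<gamma> ** P + G j ** H (j + k) ** (A (j + k) ** Oi (j + k + l) ** \<gamma>) = 0"
    by (rule eq2core) simp_all
  then have "H j ** (A (j + k - l) ** Oi (j + k) ** \<gamma> + A j ** Oi (j + l) ** \<gamma> ** P + G j ** H (j + k) ** (A (j + k) ** Oi (j + k + l) ** \<gamma>)) = 0"
    by simp
  then have "H j ** A (j + k - l) ** Oi (j + k) ** \<gamma> + A j ** Oi j ** \<gamma> ** P + A (j + k) ** Oi (j + k) ** \<gamma> = 0"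
    by (simp add: mmd HAO0 GHl)
  then show ?thesis by (rule grp4)
qed

lemma key1: "H j ** RHS1 j ** G (j + k) = N (j + k) - N j"
proof -
  have "H j ** RHS1 j ** G (j + k) =
      H j ** A j ** Oi (j + l) ** \<gamma> ** Oi (j + l) ** B (j + l) ** G (j + k)
    - H j ** A (j + k - l) ** Oi (j + k) ** \<gamma> ** Oi (j + k) ** B (j + k) ** G (j + k)
    - H j ** G (j + k - l) ** H (j + k) ** G (j + k)
    + H j ** G j ** H (j + l) ** G (j + k)"
    by (simp add: RHS1_def mmd)
  also have "\<dots> =
      (- (A j ** Oi j ** \<gamma> ** P ** Oi (j + k + l) ** B (j + k)) - A j ** Oi j ** \<gamma> ** Oi (j + l) ** B j)
    - (- (A j ** Oi j ** \<gamma> ** P ** Oi (j + k + l) ** B (j + k)) - A (j + k) ** Oi (j + k) ** \<gamma> ** Oi (j + k + l) ** B (j + k))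
    - (mat 1 + A (j + k) ** Oi (j + k) ** B (j + k - l) - A j ** Oi j ** B (j - l))
    + (mat 1 + A (j + k + l) ** Oi (j + k + l) ** B (j + k) - A (j + l) ** Oi (j + l) ** B j)"
  proof -
    have t1: "H j ** A j ** Oi (j + l) ** \<gamma> ** Oi (j + l) ** B (j + l) ** G (j + k) =
       - (A j ** Oi j ** \<gamma> ** P ** Oi (j + k + l) ** B (j + k)) - A j ** Oi j ** \<gamma> ** Oi (j + l) ** B j"
      by (simp only: HAO0 E3c)
    have t2: "H j ** A (j + k - l) ** Oi (j + k) ** \<gamma> ** Oi (j + k) ** B (j + k) ** G (j + k) =
       - (A j ** Oi j ** \<gamma> ** P ** Oi (j + k + l) ** B (j + k)) - A (j + k) ** Oi (j + k) ** \<gamma> ** Oi (j + k + l) ** B (j + k)"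
      by (simp only: OBG[OF refl] eq2H mmd)
    have t3: "H j ** G (j + k - l) ** H (j + k) ** G (j + k) = mat 1 + A (j + k) ** Oi (j + k) ** B (j + k - l) - A j ** Oi j ** B (j - l)"
      unfolding GHc by (rule Zid') simp_all
    have t4: "H j ** G j ** H (j + l) ** G (j + k) = mat 1 + A (j + k + l) ** Oi (j + k + l) ** B (j + k) - A (j + l) ** Oi (j + l) ** B j"
      unfolding GHl by (rule Zid') simp_all
    show ?thesis unfolding t1 t2 t3 t4 ..
  qed
  also have "\<dots> = N (j + k) - N j" unfolding grp5 N_def by simp
  finally show ?thesis .
qed

lemma eq1core:
  assumes "DGj ** H j + G j ** DH j = 0"
  shows "DGj ** H (j + k) + G j ** DH (j + k) = RHS1 j"
proof -
  have dg: "DGj = - (G j ** N j)"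
  proof -
    have "DGj = DGj ** H j ** G j" by (simp add: GHc)
    also have "\<dots> = - (G j ** DH j) ** G j"
    proof -
      have "DGj ** H j = - (G j ** DH j)" using assms by (simp only: eq_neg_iff_add_eq_0)
      then show ?thesis by simp
    qed
    also have "\<dots> = - (G j ** N j)" by (simp add: mmd DHG flip: matrix_mul_assoc)
    finally show ?thesis .
  qed
  have dh: "DH (j + k) = N (j + k) ** H (j + k)"
    by (metis DHG GHc(1))
  have "DGj ** H (j + k) + G j ** DH (j + k) = G j ** (H j ** RHS1 j ** G (j + k)) ** H (j + k)"
    unfolding key1 dg dh by (simp add: mmd)
  also have "\<dots> = RHS1 j" by (simp add: mmd GHl GHc)
  finally show ?thesis .
qed

end

lemma core_GH:
  assumes "core A B Om P Q \<gamma> k l"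
  shows "(mat 1 - A a ** matrix_inv (Om (a + l)) ** B a) ** (mat 1 + A a ** matrix_inv (Om a) ** B a) = mat 1"
proof -
  interpret core A B Om P Q \<gamma> k l by fact
  show ?thesis using GH unfolding G_def H_def Oi_def .
qed

lemma core_eq2:
  assumes "core A B Om P Q \<gamma> k l"
  shows "A (j + k - l) ** matrix_inv (Om (j + k)) ** \<gamma> + A j ** matrix_inv (Om (j + l)) ** \<gamma> ** P
     + (mat 1 - A j ** matrix_inv (Om (j + l)) ** B j) ** (mat 1 + A (j + k) ** matrix_inv (Om (j + k)) ** B (j + k))
       ** (A (j + k) ** matrix_inv (Om (j + k + l)) ** \<gamma>) = 0"
proof -
  interpret core A B Om P Q \<gamma> k l by fact
  show ?thesis using eq2core[OF refl refl refl refl, of j] unfolding G_def H_def Oi_def .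
qed

lemma core_eq3:
  assumes "core A B Om P Q \<gamma> k l"
  shows "matrix_inv (Om (j - k + l)) ** B (j - k + l) + P ** matrix_inv (Om j) ** B j
     + matrix_inv (Om (j - k)) ** B (j - k) ** (mat 1 - A (j - k) ** matrix_inv (Om (j - k + l)) ** B (j - k))
       ** (mat 1 + A j ** matrix_inv (Om j) ** B j) = 0"
proof -
  interpret core A B Om P Q \<gamma> k l by fact
  show ?thesis using eq3core[OF refl refl, of j] unfolding G_def H_def Oi_def .
qed

lemma core_eq1:
  assumes "core A B Om P Q \<gamma> k l"
  and "DGj ** (mat 1 + A j ** matrix_inv (Om j) ** B j) + (mat 1 - A j ** matrix_inv (Om (j + l)) ** B j) **
     (A (j + l) ** matrix_inv (Om j) ** B j - A j ** (matrix_inv (Om j) ** (B (j - l) ** A j - \<gamma>) ** matrix_inv (Om j)) ** B j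
      - A j ** matrix_inv (Om j) ** B (j - l)) = 0"
  shows "DGj ** (mat 1 + A (j + k) ** matrix_inv (Om (j + k)) ** B (j + k)) + (mat 1 - A j ** matrix_inv (Om (j + l)) ** B j) **
     (A (j + k + l) ** matrix_inv (Om (j + k)) ** B (j + k) - A (j + k) ** (matrix_inv (Om (j + k)) ** (B (j + k - l) ** A (j + k) - \<gamma>) ** matrix_inv (Om (j + k))) ** B (j + k)
      - A (j + k) ** matrix_inv (Om (j + k)) ** B (j + k - l))
   = A j ** matrix_inv (Om (j + l)) ** \<gamma> ** (matrix_inv (Om (j + l)) ** B (j + l)) - A (j + k - l) ** matrix_inv (Om (j + k)) ** \<gamma> ** (matrix_inv (Om (j + k)) ** B (j + k))
   - (mat 1 - A (j + k - l) ** matrix_inv (Om (j + k - l + l)) ** B (j + k - l)) ** (mat 1 + A (j + k) ** matrix_inv (Om (j + k)) ** B (j + k))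
   + (mat 1 - A j ** matrix_inv (Om (j + l)) ** B j) ** (mat 1 + A (j + l) ** matrix_inv (Om (j + l)) ** B (j + l))"
proof -
  interpret core A B Om P Q \<gamma> k l by fact
  show ?thesis using eq1core[of DGj j] assms(2) unfolding G_def H_def Oi_def DH_def Omd_def RHS1_def by simp
qed

lemma ecomm: "invertible (L::complex^'n^'n) \<Longrightarrow> mzpow L z ** mexp (x *\<^sub>R mzpow L l) = mexp (x *\<^sub>R mzpow L l) ** mzpow L z"
  by (rule mexp_comm) (simp add: mzpow_comm)

lemma ecommc: "invertible (L::complex^'n^'n) \<Longrightarrow> Y ** mzpow L z ** mexp (x *\<^sub>R mzpow L l) = Y ** mexp (x *\<^sub>R mzpow L l) ** mzpow L z"
  by (simp add: ecomm flip: matrix_mul_assoc)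

lemma mzpow_addc: "invertible (L::complex^'n^'n) \<Longrightarrow> c = a + b \<Longrightarrow> Y ** mzpow L a ** mzpow L b = Y ** mzpow L c"
  by (simp add: mzpow_add flip: matrix_mul_assoc)

lemma rootP: "invertible (L::complex^'n^'n) \<Longrightarrow> - (mzpow L k + mzpow L (k - l)) = P \<Longrightarrow>
   Y ** mzpow L b ** P = - (Y ** mzpow L (b + k) + Y ** mzpow L (b + k - l))"
proof -
  assume L: "invertible L" and r: "- (mzpow L k + mzpow L (k - l)) = P"
  have "Y ** mzpow L b ** P = - (Y ** mzpow L b ** mzpow L k + Y ** mzpow L b ** mzpow L (k - l))"
    by (simp add: r[symmetric] mmd)
  also have "\<dots> = - (Y ** mzpow L (b + k) + Y ** mzpow L (b + k - l))"
  proof -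
    have "Y ** mzpow L b ** mzpow L (k - l) = Y ** mzpow L (b + k - l)" by (rule mzpow_addc[OF L]) simp
    moreover have "Y ** mzpow L b ** mzpow L k = Y ** mzpow L (b + k)" by (rule mzpow_addc[OF L]) simp
    ultimately show ?thesis by simp
  qed
  finally show ?thesis .
qed

lemma rootQ: "invertible (L::complex^'n^'n) \<Longrightarrow> - (mzpow L k + mzpow L (k - l)) = Q \<Longrightarrow>
   Q ** mzpow L (- a) ** Y = - (mzpow L (- (a - k)) ** Y + mzpow L (- (a - k + l)) ** Y)"
proof -
  assume L: "invertible L" and r: "- (mzpow L k + mzpow L (k - l)) = Q"
  have "Q ** mzpow L (- a) ** Y = - (mzpow L k ** mzpow L (- a) ** Y + mzpow L (k - l) ** mzpow L (- a) ** Y)"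
    by (simp add: r[symmetric] mmd)
  also have "\<dots> = - (mzpow L (- (a - k)) ** Y + mzpow L (- (a - k + l)) ** Y)"
    by (simp add: mzpow_add[OF L] algebra_simps)
  finally show ?thesis .
qed

lemma Qcomm: "invertible (L::complex^'n^'n) \<Longrightarrow> - (mzpow L k + mzpow L (k - l)) = Q \<Longrightarrow>
   Q ** mexp (x *\<^sub>R mzpow L l) = mexp (x *\<^sub>R mzpow L l) ** Q"
proof -
  assume L: "invertible L" and r: "- (mzpow L k + mzpow L (k - l)) = Q"
  show ?thesis unfolding r[symmetric] by (simp add: mmd ecomm[OF L])
qed


lemma rootQc: "invertible (L::complex^'n^'n) \<Longrightarrow> - (mzpow L k + mzpow L (k - l)) = Q \<Longrightarrow>
   Z ** Q ** mzpow L (- a) = - (Z ** mzpow L (- (a - k)) + Z ** mzpow L (- (a - k + l)))"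
proof -
  assume L: "invertible L" and r: "- (mzpow L k + mzpow L (k - l)) = Q"
  have "Q ** mzpow L (- a) = - (mzpow L (- (a - k)) + mzpow L (- (a - k + l)))"
    using rootQ[OF L r, of a "mat 1"] by simp
  then have "Z ** (Q ** mzpow L (- a)) = - (Z ** mzpow L (- (a - k)) + Z ** mzpow L (- (a - k + l)))"
    by (simp add: mmd)
  then show ?thesis by (simp add: matrix_mul_assoc)
qed

lemma Qcommc: "invertible (L::complex^'n^'n) \<Longrightarrow> - (mzpow L k + mzpow L (k - l)) = Q \<Longrightarrow>
   Q ** mexp (x *\<^sub>R mzpow L l) ** Z = mexp (x *\<^sub>R mzpow L l) ** Q ** Z"
  by (simp add: Qcomm)

lemma mm_vd:
  fixes f :: "real \<Rightarrow> complex^'n^'m" and g :: "real \<Rightarrow> complex^'p^'n"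
  shows "(f has_vector_derivative f') (at t) \<Longrightarrow> (g has_vector_derivative g') (at t) \<Longrightarrow>
    ((\<lambda>s. f s ** g s) has_vector_derivative (f t ** g' + f' ** g t)) (at t)"
  by (rule bounded_bilinear.has_vector_derivative[OF bb_mm])

lemma mexp_deriv_neg:
  fixes M :: "complex^'n^'n"
  shows "((\<lambda>x. mexp ((- x) *\<^sub>R M)) has_vector_derivative (- (M ** mexp ((- t) *\<^sub>R M)))) (at t)"
  using mexp_deriv[of "- M" t] by (simp add: mm_neg_l)

lemma term_shift:
  assumes L: "invertible (L::complex^'n^'n)" and L': "invertible (L'::complex^'n^'n)"
    and Xe: "mzpow L' (- l) ** X ** mzpow L l - X = B' ** A'"
    and a2: "a2 = a + l" and b2: "b2 = b + l"
  shows "Fm ** mzpow L' (- a2) ** X ** mexp (x *\<^sub>R mzpow L l) ** mzpow L b2 =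
     Fm ** mzpow L' (- a) ** X ** mexp (x *\<^sub>R mzpow L l) ** mzpow L b
     + Fm ** mzpow L' (- a) ** B' ** (A' ** mexp (x *\<^sub>R mzpow L l) ** mzpow L b)"
proof -
  let ?E = "mexp (x *\<^sub>R mzpow L l)"
  have X2: "mzpow L' (- l) ** X ** mzpow L l = X + B' ** A'" using Xe by (simp add: algebra_simps)
  have p1: "mzpow L' (- a2) = mzpow L' (- a) ** mzpow L' (- l)" using mzpow_add[OF L', of "-a" "-l"] a2 by simp
  have p2: "mzpow L b2 = mzpow L l ** mzpow L b" using mzpow_add[OF L, of l b] b2 by (simp add: add.commute)
  have "Fm ** mzpow L' (- a2) ** X ** ?E ** mzpow L b2 = Fm ** mzpow L' (- a) ** mzpow L' (- l) ** X ** (?E ** mzpow L l) ** mzpow L b"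
    by (simp add: p1 p2 mmd)
  also have "\<dots> = Fm ** mzpow L' (- a) ** (mzpow L' (- l) ** X ** mzpow L l) ** ?E ** mzpow L b"
    by (simp add: ecommc[OF L, symmetric] mmd)
  also have "\<dots> = Fm ** mzpow L' (- a) ** X ** ?E ** mzpow L b + Fm ** mzpow L' (- a) ** B' ** (A' ** ?E ** mzpow L b)"
    by (simp add: X2 mmd)
  finally show ?thesis .
qed

lemma d_theta_term:
  assumes L: "invertible (L::complex^'n^'n)"
  shows "((\<lambda>s. A' ** mexp (s *\<^sub>R mzpow L l) ** mzpow L j) has_vector_derivative
     (A' ** mexp (t *\<^sub>R mzpow L l) ** mzpow L (j + l))) (at t)"
proof -
  have "((\<lambda>s. A' ** mexp (s *\<^sub>R mzpow L l) ** mzpow L j) has_vector_derivative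
     (A' ** mexp (t *\<^sub>R mzpow L l) ** 0 + (A' ** (mzpow L l ** mexp (t *\<^sub>R mzpow L l)) + 0 ** mexp (t *\<^sub>R mzpow L l)) ** mzpow L j)) (at t)"
    by (intro mm_vd has_vector_derivative_const mexp_deriv)
  moreover have "A' ** mexp (t *\<^sub>R mzpow L l) ** 0 + (A' ** (mzpow L l ** mexp (t *\<^sub>R mzpow L l)) + 0 ** mexp (t *\<^sub>R mzpow L l)) ** mzpow L j
      = A' ** mexp (t *\<^sub>R mzpow L l) ** mzpow L (j + l)"
  proof -
    have "A' ** mexp (t *\<^sub>R mzpow L l) ** mzpow L l ** mzpow L j = A' ** mexp (t *\<^sub>R mzpow L l) ** mzpow L (j + l)"
      by (rule mzpow_addc[OF L]) simp
    then show ?thesis by (simp add: matrix_mul_assoc ecommc[OF L])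
  qed
  ultimately show ?thesis by (rule has_vector_derivative_eq_rhs)
qed

lemma d_F:
  assumes L: "invertible (L::complex^'n^'n)"
  shows "((\<lambda>s. mexp ((- s) *\<^sub>R mzpow L l)) has_vector_derivative (- (mexp ((- t) *\<^sub>R mzpow L l) ** mzpow L l))) (at t)"
  using mexp_deriv_neg[of "mzpow L l" t] ecomm[OF L, of l "- t"] by simp

lemma d_eta_term:
  assumes L: "invertible (L::complex^'n^'n)"
  shows "((\<lambda>s. mexp ((- s) *\<^sub>R mzpow L l) ** mzpow L (- j) ** B') has_vector_derivative
     (- (mexp ((- t) *\<^sub>R mzpow L l) ** mzpow L (- (j - l)) ** B'))) (at t)"
proof -
  have "((\<lambda>s. mexp ((- s) *\<^sub>R mzpow L l) ** mzpow L (- j) ** B') has_vector_derivative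
     (mexp ((- t) *\<^sub>R mzpow L l) ** mzpow L (- j) ** 0 + (mexp ((- t) *\<^sub>R mzpow L l) ** 0 + (- (mexp ((- t) *\<^sub>R mzpow L l) ** mzpow L l)) ** mzpow L (- j)) ** B')) (at t)"
    by (intro mm_vd has_vector_derivative_const d_F L)
  moreover have "mexp ((- t) *\<^sub>R mzpow L l) ** mzpow L (- j) ** 0 + (mexp ((- t) *\<^sub>R mzpow L l) ** 0 + (- (mexp ((- t) *\<^sub>R mzpow L l) ** mzpow L l)) ** mzpow L (- j)) ** B'
      = - (mexp ((- t) *\<^sub>R mzpow L l) ** mzpow L (- (j - l)) ** B')"
  proof -
    have "mexp ((- t) *\<^sub>R mzpow L l) ** mzpow L l ** mzpow L (- j) = mexp ((- t) *\<^sub>R mzpow L l) ** mzpow L (- (j - l))"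
      by (rule mzpow_addc[OF L]) simp
    then show ?thesis by (simp add: mmd)
  qed
  ultimately show ?thesis by (rule has_vector_derivative_eq_rhs)
qed

lemma d_T_term:
  assumes L: "invertible (L::complex^'n^'n)" and L': "invertible (L'::complex^'n^'n)"
  shows "((\<lambda>s. mexp ((- s) *\<^sub>R mzpow L' l) ** mzpow L' (- a) ** Xm ** mexp (s *\<^sub>R mzpow L l) ** mzpow L b) has_vector_derivative
     (- (mexp ((- t) *\<^sub>R mzpow L' l) ** mzpow L' (- (a - l)) ** Xm ** mexp (t *\<^sub>R mzpow L l) ** mzpow L b)
      + mexp ((- t) *\<^sub>R mzpow L' l) ** mzpow L' (- a) ** Xm ** mexp (t *\<^sub>R mzpow L l) ** mzpow L (b + l))) (at t)"
proof -
  have f: "((\<lambda>s. mexp ((- s) *\<^sub>R mzpow L' l) ** mzpow L' (- a) ** Xm) has_vector_derivative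
     (- (mexp ((- t) *\<^sub>R mzpow L' l) ** mzpow L' (- (a - l)) ** Xm))) (at t)"
    by (rule d_eta_term[OF L'])
  have g: "((\<lambda>s. mat 1 ** mexp (s *\<^sub>R mzpow L l) ** mzpow L b) has_vector_derivative
     (mat 1 ** mexp (t *\<^sub>R mzpow L l) ** mzpow L (b + l))) (at t)"
    by (rule d_theta_term[OF L])
  from mm_vd[OF f g] show ?thesis
    by (simp add: mmd add.commute)
qed

theorem mainTheorem2:
  fixes k l :: int
    and P Q :: "complex^'n^'n"
    and RP RQ :: "(complex^'n^'n) set"
    and A :: "complex^'n^'n \<Rightarrow> complex^'n^'m"
    and B :: "complex^'n^'n \<Rightarrow> complex^'m^'n"
    and X :: "complex^'n^'n \<Rightarrow> complex^'n^'n \<Rightarrow> complex^'n^'n"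
    and \<omega> \<omega>' :: "real \<Rightarrow> complex^'n^'n"
    and \<gamma>2 :: "real \<Rightarrow> complex^'n^'n"
    and \<theta> :: "real \<Rightarrow> int \<Rightarrow> complex^'n^'m"
    and \<eta> :: "real \<Rightarrow> int \<Rightarrow> complex^'m^'n"
    and \<Omega> :: "real \<Rightarrow> int \<Rightarrow> complex^'n^'n"
    and g0 :: "complex^'m^'m"
    and g :: "real \<Rightarrow> int \<Rightarrow> complex^'m^'m"
    and q :: "real \<Rightarrow> int \<Rightarrow> complex^'n^'m"
    and r :: "real \<Rightarrow> int \<Rightarrow> complex^'m^'n"
  assumes k_pos: "k > 0"
    and RP_fin: "finite RP"
    and RP_inv: "\<And>\<Lambda>. \<Lambda> \<in> RP \<Longrightarrow> invertible \<Lambda>"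
    and RP_root: "\<And>\<Lambda>. \<Lambda> \<in> RP \<Longrightarrow> - (mzpow \<Lambda> k + mzpow \<Lambda> (k - l)) = P"
    and RQ_fin: "finite RQ"
    and RQ_inv: "\<And>\<Lambda>'. \<Lambda>' \<in> RQ \<Longrightarrow> invertible \<Lambda>'"
    and RQ_root: "\<And>\<Lambda>'. \<Lambda>' \<in> RQ \<Longrightarrow> - (mzpow \<Lambda>' k + mzpow \<Lambda>' (k - l)) = Q"
    and X_eq: "\<And>\<Lambda> \<Lambda>'. \<Lambda> \<in> RP \<Longrightarrow> \<Lambda>' \<in> RQ \<Longrightarrow>
        mzpow \<Lambda>' (- l) ** X \<Lambda>' \<Lambda> ** mzpow \<Lambda> l - X \<Lambda>' \<Lambda> = B \<Lambda>' ** A \<Lambda>"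
    and \<omega>_deriv: "\<And>t. (\<omega> has_vector_derivative \<omega>' t) (at t)"
    and \<omega>_comm: "\<And>t. Q ** \<omega> t = \<omega> t ** P"
    and \<gamma>2_def: "\<And>t. \<gamma>2 t = - \<omega>' t"
    and \<theta>_def: "\<And>t j. \<theta> t j = (\<Sum>\<Lambda>\<in>RP. A \<Lambda> ** mexp (t *\<^sub>R mzpow \<Lambda> l) ** mzpow \<Lambda> j)"
    and \<eta>_def: "\<And>t j. \<eta> t j = (\<Sum>\<Lambda>'\<in>RQ. mexp ((- t) *\<^sub>R mzpow \<Lambda>' l) ** mzpow \<Lambda>' (- j) ** B \<Lambda>')"
    and \<Omega>_def: "\<And>t j. \<Omega> t j = (\<Sum>\<Lambda>\<in>RP. \<Sum>\<Lambda>'\<in>RQ.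
        mexp ((- t) *\<^sub>R mzpow \<Lambda>' l) ** mzpow \<Lambda>' (- j) ** X \<Lambda>' \<Lambda>
          ** mexp (t *\<^sub>R mzpow \<Lambda> l) ** mzpow \<Lambda> j) + \<omega> t"
    and \<Omega>_inv: "\<And>t j. invertible (\<Omega> t j)"
    and g0_inv: "invertible g0"
    and g_def: "\<And>t j. g t j = (mat 1 - \<theta> t j ** matrix_inv (\<Omega> t (j + l)) ** \<eta> t j) ** g0"
    and q_def: "\<And>t j. q t j = \<theta> t j ** matrix_inv (\<Omega> t (j + l)) ** \<gamma>2 t"
    and r_def: "\<And>t j. r t j = matrix_inv (\<Omega> t j) ** \<eta> t j"
    and g_inv: "\<And>t j. invertible (g t j)"
  shows "\<forall>t j.
      ((\<lambda>s. g s j ** matrix_inv (g s (j + k))) has_vector_derivative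
         (q t (j + l - l) ** r t (j + l) - q t (j + k - l) ** r t (j + k)
          - g t (j + (k - l)) ** matrix_inv (g t (j + (k - l) + l))
          + g t j ** matrix_inv (g t (j + l)))) (at t)
    \<and> q t (j + (k - l)) + q t j ** P + g t j ** matrix_inv (g t (j + k)) ** q t (j + k) = 0
    \<and> r t (j + (l - k)) + P ** r t j + r t (j - k) ** g t (j - k) ** matrix_inv (g t j) = 0"
proof -
  define E where "E = (\<lambda>(L::complex^'n^'n) (s::real). mexp (s *\<^sub>R mzpow L l))"
  define F where "F = (\<lambda>(L::complex^'n^'n) (s::real). mexp ((- s) *\<^sub>R mzpow L l))"
  define T where "T = (\<lambda>s a b. \<Sum>\<Lambda>\<in>RP. \<Sum>\<Lambda>'\<in>RQ. F \<Lambda>' s ** mzpow \<Lambda>' (- a) ** X \<Lambda>' \<Lambda> ** E \<Lambda> s ** mzpow \<Lambda> b)"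
  have th: "\<theta> s j = (\<Sum>\<Lambda>\<in>RP. A \<Lambda> ** E \<Lambda> s ** mzpow \<Lambda> j)" for s j
    using \<theta>_def unfolding E_def by simp
  have et: "\<eta> s j = (\<Sum>\<Lambda>'\<in>RQ. F \<Lambda>' s ** mzpow \<Lambda>' (- j) ** B \<Lambda>')" for s j
    using \<eta>_def unfolding F_def by simp
  have Om: "\<Omega> s j = T s j j + \<omega> s" for s j
    using \<Omega>_def unfolding T_def E_def F_def by simp
  have S1: "T s a2 b2 = T s a b + \<eta> s a ** \<theta> s b" if a2: "a2 = a + l" and b2: "b2 = b + l" for s a b a2 b2
  proof -
    have "T s a2 b2 = (\<Sum>\<Lambda>\<in>RP. \<Sum>\<Lambda>'\<in>RQ. F \<Lambda>' s ** mzpow \<Lambda>' (- a) ** X \<Lambda>' \<Lambda> ** E \<Lambda> s ** mzpow \<Lambda> b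
         + F \<Lambda>' s ** mzpow \<Lambda>' (- a) ** B \<Lambda>' ** (A \<Lambda> ** E \<Lambda> s ** mzpow \<Lambda> b))"
      unfolding T_def E_def
      by (intro sum.cong refl term_shift RP_inv RQ_inv X_eq a2 b2) auto
    also have "\<dots> = T s a b + (\<Sum>\<Lambda>\<in>RP. \<Sum>\<Lambda>'\<in>RQ. F \<Lambda>' s ** mzpow \<Lambda>' (- a) ** B \<Lambda>' ** (A \<Lambda> ** E \<Lambda> s ** mzpow \<Lambda> b))"
      unfolding T_def by (simp add: sum.distrib)
    also have "(\<Sum>\<Lambda>\<in>RP. \<Sum>\<Lambda>'\<in>RQ. F \<Lambda>' s ** mzpow \<Lambda>' (- a) ** B \<Lambda>' ** (A \<Lambda> ** E \<Lambda> s ** mzpow \<Lambda> b)) = \<eta> s a ** \<theta> s b"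
      unfolding th et mm_sum_l mm_sum_r by (simp add: sum.swap[where A=RP])
    finally show ?thesis .
  qed
  have S2: "Q ** T s a b = - (T s (a - k) b + T s (a - k + l) b)" for s a b
  proof -
    have "Q ** T s a b = (\<Sum>\<Lambda>\<in>RP. \<Sum>\<Lambda>'\<in>RQ. - (F \<Lambda>' s ** mzpow \<Lambda>' (- (a - k)) ** X \<Lambda>' \<Lambda> ** E \<Lambda> s ** mzpow \<Lambda> b
         + F \<Lambda>' s ** mzpow \<Lambda>' (- (a - k + l)) ** X \<Lambda>' \<Lambda> ** E \<Lambda> s ** mzpow \<Lambda> b))"
      unfolding T_def mm_sum_r
    proof (intro sum.cong refl)
      fix \<Lambda> \<Lambda>' assume L: "\<Lambda> \<in> RP" and L': "\<Lambda>' \<in> RQ"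
      have "Q ** (F \<Lambda>' s ** mzpow \<Lambda>' (- a) ** X \<Lambda>' \<Lambda> ** E \<Lambda> s ** mzpow \<Lambda> b)
          = F \<Lambda>' s ** Q ** mzpow \<Lambda>' (- a) ** X \<Lambda>' \<Lambda> ** E \<Lambda> s ** mzpow \<Lambda> b"
        using Qcomm[OF RQ_inv[OF L'] RQ_root[OF L'], of "- s"] unfolding F_def by (simp only: matrix_mul_assoc)
      also have "\<dots> = - (F \<Lambda>' s ** mzpow \<Lambda>' (- (a - k)) ** X \<Lambda>' \<Lambda> ** E \<Lambda> s ** mzpow \<Lambda> b
         + F \<Lambda>' s ** mzpow \<Lambda>' (- (a - k + l)) ** X \<Lambda>' \<Lambda> ** E \<Lambda> s ** mzpow \<Lambda> b)"
        by (simp add: rootQc[OF RQ_inv[OF L'] RQ_root[OF L']] mmd)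
      finally show "Q ** (F \<Lambda>' s ** mzpow \<Lambda>' (- a) ** X \<Lambda>' \<Lambda> ** E \<Lambda> s ** mzpow \<Lambda> b) = - (F \<Lambda>' s ** mzpow \<Lambda>' (- (a - k)) ** X \<Lambda>' \<Lambda> ** E \<Lambda> s ** mzpow \<Lambda> b
         + F \<Lambda>' s ** mzpow \<Lambda>' (- (a - k + l)) ** X \<Lambda>' \<Lambda> ** E \<Lambda> s ** mzpow \<Lambda> b)" .
    qed
    also have "\<dots> = - (T s (a - k) b + T s (a - k + l) b)"
      unfolding T_def by (simp add: sum.distrib sum_negf sum_subtractf)
    finally show ?thesis .
  qed
  have S3: "T s a b ** P = - (T s a (b + k) + T s a (b + k - l))" for s a b
  proof -
    have "T s a b ** P = (\<Sum>\<Lambda>\<in>RP. \<Sum>\<Lambda>'\<in>RQ. - (F \<Lambda>' s ** mzpow \<Lambda>' (- a) ** X \<Lambda>' \<Lambda> ** E \<Lambda> s ** mzpow \<Lambda> (b + k)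
         + F \<Lambda>' s ** mzpow \<Lambda>' (- a) ** X \<Lambda>' \<Lambda> ** E \<Lambda> s ** mzpow \<Lambda> (b + k - l)))"
      unfolding T_def mm_sum_l
      by (intro sum.cong refl rootP[OF RP_inv RP_root])
    also have "\<dots> = - (T s a (b + k) + T s a (b + k - l))"
      unfolding T_def by (simp add: sum.distrib sum_negf sum_subtractf)
    finally show ?thesis .
  qed
  have Th: "\<theta> s (a + k) + \<theta> s (a + k - l) = - (\<theta> s a ** P)" for s a
  proof -
    have "\<theta> s a ** P = (\<Sum>\<Lambda>\<in>RP. - (A \<Lambda> ** E \<Lambda> s ** mzpow \<Lambda> (a + k) + A \<Lambda> ** E \<Lambda> s ** mzpow \<Lambda> (a + k - l)))"
      unfolding th mm_sum_l by (intro sum.cong refl rootP[OF RP_inv RP_root])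
    then show ?thesis unfolding th by (simp add: sum.distrib sum_negf sum_subtractf)
  qed
  have Et: "\<eta> s (a - k) + \<eta> s (a - k + l) = - (Q ** \<eta> s a)" for s a
  proof -
    have "Q ** \<eta> s a = (\<Sum>\<Lambda>'\<in>RQ. - (F \<Lambda>' s ** mzpow \<Lambda>' (- (a - k)) ** B \<Lambda>' + F \<Lambda>' s ** mzpow \<Lambda>' (- (a - k + l)) ** B \<Lambda>'))"
      unfolding et mm_sum_r
    proof (intro sum.cong refl)
      fix \<Lambda>' assume L': "\<Lambda>' \<in> RQ"
      have "Q ** (F \<Lambda>' s ** mzpow \<Lambda>' (- a) ** B \<Lambda>') = F \<Lambda>' s ** Q ** mzpow \<Lambda>' (- a) ** B \<Lambda>'"
        using Qcomm[OF RQ_inv[OF L'] RQ_root[OF L'], of "- s"] unfolding F_def by (simp only: matrix_mul_assoc)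
      also have "\<dots> = - (F \<Lambda>' s ** mzpow \<Lambda>' (- (a - k)) ** B \<Lambda>' + F \<Lambda>' s ** mzpow \<Lambda>' (- (a - k + l)) ** B \<Lambda>')"
        by (simp add: rootQc[OF RQ_inv[OF L'] RQ_root[OF L']] mmd)
      finally show "Q ** (F \<Lambda>' s ** mzpow \<Lambda>' (- a) ** B \<Lambda>') = - (F \<Lambda>' s ** mzpow \<Lambda>' (- (a - k)) ** B \<Lambda>' + F \<Lambda>' s ** mzpow \<Lambda>' (- (a - k + l)) ** B \<Lambda>')" .
    qed
    then show ?thesis unfolding et by (simp add: sum.distrib sum_negf sum_subtractf)
  qed
  have h1: "\<Omega> s b = \<Omega> s a + \<eta> s a ** \<theta> s a" if "b = a + l" for s a b
    unfolding Om using S1[OF that that, of s] by simp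
  have h4: "Q ** \<Omega> s b = \<Omega> s a ** P - \<eta> s a ** \<theta> s c" if b: "b = a + k" and c: "c = a + k - l" for s a b c
  proof -
    have "Q ** T s b b = - (T s a b + T s (a + l) b)"
      using S2[of s b b] b by simp
    also have "T s (a + l) b = T s a c + \<eta> s a ** \<theta> s c" by (rule S1) (simp_all add: b c)
    also have "- (T s a b + (T s a c + \<eta> s a ** \<theta> s c)) = T s a a ** P - \<eta> s a ** \<theta> s c"
      using S3[of s a a] by (simp add: b c algebra_simps)
    finally have "Q ** T s b b = T s a a ** P - \<eta> s a ** \<theta> s c" .
    then show ?thesis unfolding Om by (simp add: mmd \<omega>_comm)
  qed
  have dth: "((\<lambda>s. \<theta> s j) has_vector_derivative \<theta> t (j + l)) (at t)" for t j
  proof -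
    have "((\<lambda>s. \<Sum>\<Lambda>\<in>RP. A \<Lambda> ** E \<Lambda> s ** mzpow \<Lambda> j) has_vector_derivative (\<Sum>\<Lambda>\<in>RP. A \<Lambda> ** E \<Lambda> t ** mzpow \<Lambda> (j + l))) (at t)"
      unfolding E_def by (intro has_vector_derivative_sum d_theta_term RP_inv)
    then show ?thesis unfolding th[symmetric] by simp
  qed
  have det: "((\<lambda>s. \<eta> s j) has_vector_derivative - \<eta> t (j - l)) (at t)" for t j
  proof -
    have "((\<lambda>s. \<Sum>\<Lambda>'\<in>RQ. F \<Lambda>' s ** mzpow \<Lambda>' (- j) ** B \<Lambda>') has_vector_derivative (\<Sum>\<Lambda>'\<in>RQ. - (F \<Lambda>' t ** mzpow \<Lambda>' (- (j - l)) ** B \<Lambda>'))) (at t)"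
      unfolding F_def by (intro has_vector_derivative_sum d_eta_term RQ_inv)
    then show ?thesis unfolding et[symmetric] sum_negf by simp
  qed
  have dT: "((\<lambda>s. T s a b) has_vector_derivative \<eta> t (a - l) ** \<theta> t b) (at t)" for t a b
  proof -
    have "((\<lambda>s. T s a b) has_vector_derivative (\<Sum>\<Lambda>\<in>RP. \<Sum>\<Lambda>'\<in>RQ.
        - (F \<Lambda>' t ** mzpow \<Lambda>' (- (a - l)) ** X \<Lambda>' \<Lambda> ** E \<Lambda> t ** mzpow \<Lambda> b)
        + F \<Lambda>' t ** mzpow \<Lambda>' (- a) ** X \<Lambda>' \<Lambda> ** E \<Lambda> t ** mzpow \<Lambda> (b + l))) (at t)"
      unfolding T_def E_def F_def by (intro has_vector_derivative_sum d_T_term RP_inv RQ_inv)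
    moreover have "(\<Sum>\<Lambda>\<in>RP. \<Sum>\<Lambda>'\<in>RQ.
        - (F \<Lambda>' t ** mzpow \<Lambda>' (- (a - l)) ** X \<Lambda>' \<Lambda> ** E \<Lambda> t ** mzpow \<Lambda> b)
        + F \<Lambda>' t ** mzpow \<Lambda>' (- a) ** X \<Lambda>' \<Lambda> ** E \<Lambda> t ** mzpow \<Lambda> (b + l)) = - T t (a - l) b + T t a (b + l)"
      unfolding T_def by (simp add: sum.distrib sum_negf sum_subtractf)
    moreover have "T t a (b + l) = T t (a - l) b + \<eta> t (a - l) ** \<theta> t b" by (rule S1) simp_all
    ultimately show ?thesis by simp
  qed
  have dOm: "((\<lambda>s. \<Omega> s j) has_vector_derivative (\<eta> t (j - l) ** \<theta> t j - \<gamma>2 t)) (at t)" for t j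
  proof -
    have "((\<lambda>s. T s j j + \<omega> s) has_vector_derivative (\<eta> t (j - l) ** \<theta> t j + \<omega>' t)) (at t)"
      by (intro has_vector_derivative_add dT \<omega>_deriv)
    then show ?thesis unfolding Om[symmetric] \<gamma>2_def by simp
  qed
  have h5: "Q ** \<gamma>2 t = \<gamma>2 t ** P" for t
  proof -
    have d1: "((\<lambda>s. Q ** \<omega> s) has_vector_derivative (Q ** \<omega>' t + 0 ** \<omega> t)) (at t)"
      by (intro mm_vd has_vector_derivative_const \<omega>_deriv)
    have d2: "((\<lambda>s. Q ** \<omega> s) has_vector_derivative (\<omega> t ** 0 + \<omega>' t ** P)) (at t)"
      unfolding \<omega>_comm by (intro mm_vd has_vector_derivative_const \<omega>_deriv)
    have "Q ** \<omega>' t = \<omega>' t ** P" using vector_derivative_unique_at[OF d1 d2] by simp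
    then show ?thesis unfolding \<gamma>2_def by (simp add: mm_neg_l mm_neg_r)
  qed
  have core: "core (\<theta> s) (\<eta> s) (\<Omega> s) P Q (\<gamma>2 s) k l" for s
  proof
    show "\<And>b a. b = a + l \<Longrightarrow> \<Omega> s b = \<Omega> s a + \<eta> s a ** \<theta> s a" by (rule h1)
    show "\<And>b a c. b = a + k \<Longrightarrow> c = a + k - l \<Longrightarrow> \<theta> s b + \<theta> s c = - (\<theta> s a ** P)" using Th by simp
    show "\<And>b a c. b = a - k \<Longrightarrow> c = a - k + l \<Longrightarrow> \<eta> s b + \<eta> s c = - (Q ** \<eta> s a)" using Et by simp
    show "\<And>b a c. b = a + k \<Longrightarrow> c = a + k - l \<Longrightarrow> Q ** \<Omega> s b = \<Omega> s a ** P - \<eta> s a ** \<theta> s c" by (rule h4)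
    show "Q ** \<gamma>2 s = \<gamma>2 s ** P" by (rule h5)
    show "\<And>a. invertible (\<Omega> s a)" by (rule \<Omega>_inv)
  qed
  define Gf where "Gf = (\<lambda>s a. mat 1 - \<theta> s a ** matrix_inv (\<Omega> s (a + l)) ** \<eta> s a)"
  define Hf where "Hf = (\<lambda>s a. mat 1 + \<theta> s a ** matrix_inv (\<Omega> s a) ** \<eta> s a)"
  have GH: "Gf s a ** Hf s a = mat 1" for s a
    unfolding Gf_def Hf_def by (rule core_GH[OF core])
  have gg: "g s a ** matrix_inv (g s b) = Gf s a ** Hf s b" for s a b
  proof -
    have gd: "g s c = Gf s c ** g0" for c unfolding Gf_def by (rule g_def)
    have "(Gf s b ** g0) ** (matrix_inv g0 ** Hf s b) = Gf s b ** (g0 ** matrix_inv g0) ** Hf s b"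
      by (simp add: matrix_mul_assoc)
    also have "\<dots> = mat 1" by (simp add: inv_r g0_inv GH)
    finally have "matrix_inv (g s b) = matrix_inv g0 ** Hf s b" unfolding gd by (rule inv_unique)
    then have "g s a ** matrix_inv (g s b) = Gf s a ** (g0 ** matrix_inv g0) ** Hf s b"
      by (simp add: gd matrix_mul_assoc)
    then show ?thesis by (simp add: inv_r g0_inv)
  qed
  show ?thesis
  proof (intro allI conjI)
    fix t j
    show "q t (j + (k - l)) + q t j ** P + g t j ** matrix_inv (g t (j + k)) ** q t (j + k) = 0"
    proof -
      have idx: "j + (k - l) = j + k - l" "j + k - l + l = j + k" by simp_all
      show ?thesis unfolding q_def idx gg Gf_def Hf_def using core_eq2[OF core[of t], of j] .
    qed
    show "r t (j + (l - k)) + P ** r t j + r t (j - k) ** g t (j - k) ** matrix_inv (g t j) = 0"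
    proof -
      have idx: "j + (l - k) = j - k + l" by simp
      have "r t (j - k) ** g t (j - k) ** matrix_inv (g t j) = r t (j - k) ** (Gf t (j - k) ** Hf t j)"
        by (simp add: gg flip: matrix_mul_assoc)
      then show ?thesis unfolding idx using core_eq3[OF core[of t], of j]
        by (simp add: r_def Gf_def Hf_def matrix_mul_assoc)
    qed
    show "((\<lambda>s. g s j ** matrix_inv (g s (j + k))) has_vector_derivative
         (q t (j + l - l) ** r t (j + l) - q t (j + k - l) ** r t (j + k)
          - g t (j + (k - l)) ** matrix_inv (g t (j + (k - l) + l))
          + g t j ** matrix_inv (g t (j + l)))) (at t)"
    proof -
      have dOi: "((\<lambda>s. matrix_inv (\<Omega> s a)) has_vector_derivative
          - (matrix_inv (\<Omega> t a) ** (\<eta> t (a - l) ** \<theta> t a - \<gamma>2 t) ** matrix_inv (\<Omega> t a))) (at t)" for a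
        by (rule inv_deriv[OF dOm \<Omega>_inv])
      define DHf where "DHf = (\<lambda>b. \<theta> t (b + l) ** matrix_inv (\<Omega> t b) ** \<eta> t b
         - \<theta> t b ** (matrix_inv (\<Omega> t b) ** (\<eta> t (b - l) ** \<theta> t b - \<gamma>2 t) ** matrix_inv (\<Omega> t b)) ** \<eta> t b
         - \<theta> t b ** matrix_inv (\<Omega> t b) ** \<eta> t (b - l))"
      have dH: "((\<lambda>s. Hf s b) has_vector_derivative DHf b) (at t)" for b
      proof -
        have "((\<lambda>s. mat 1 + \<theta> s b ** matrix_inv (\<Omega> s b) ** \<eta> s b) has_vector_derivative
           0 + (\<theta> t b ** matrix_inv (\<Omega> t b) ** - \<eta> t (b - l) +
             (\<theta> t b ** - (matrix_inv (\<Omega> t b) ** (\<eta> t (b - l) ** \<theta> t b - \<gamma>2 t) ** matrix_inv (\<Omega> t b))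
              + \<theta> t (b + l) ** matrix_inv (\<Omega> t b)) ** \<eta> t b)) (at t)"
          by (intro has_vector_derivative_add has_vector_derivative_const mm_vd dth dOi det)
        moreover have "0 + (\<theta> t b ** matrix_inv (\<Omega> t b) ** - \<eta> t (b - l) +
             (\<theta> t b ** - (matrix_inv (\<Omega> t b) ** (\<eta> t (b - l) ** \<theta> t b - \<gamma>2 t) ** matrix_inv (\<Omega> t b))
              + \<theta> t (b + l) ** matrix_inv (\<Omega> t b)) ** \<eta> t b) = DHf b"
          unfolding DHf_def by (simp add: mmd algebra_simps)
        ultimately show ?thesis unfolding Hf_def by (rule has_vector_derivative_eq_rhs)
      qed
      define DGj where "DGj = 0 - (\<theta> t j ** matrix_inv (\<Omega> t (j + l)) ** - \<eta> t (j - l) +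
             (\<theta> t j ** - (matrix_inv (\<Omega> t (j + l)) ** (\<eta> t (j + l - l) ** \<theta> t (j + l) - \<gamma>2 t) ** matrix_inv (\<Omega> t (j + l)))
              + \<theta> t (j + l) ** matrix_inv (\<Omega> t (j + l))) ** \<eta> t j)"
      have dG: "((\<lambda>s. Gf s j) has_vector_derivative DGj) (at t)"
        unfolding Gf_def DGj_def
        by (intro has_vector_derivative_diff has_vector_derivative_const mm_vd dth dOi det)
      have "((\<lambda>s. Gf s j ** Hf s j) has_vector_derivative (Gf t j ** DHf j + DGj ** Hf t j)) (at t)"
        by (rule mm_vd[OF dG dH])
      moreover have "((\<lambda>s. Gf s j ** Hf s j) has_vector_derivative 0) (at t)"
        unfolding GH by simp
      ultimately have z: "DGj ** Hf t j + Gf t j ** DHf j = 0"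
        using vector_derivative_unique_at by (metis add.commute)
      have c1: "DGj ** Hf t (j + k) + Gf t j ** DHf (j + k) =
        \<theta> t j ** matrix_inv (\<Omega> t (j + l)) ** \<gamma>2 t ** (matrix_inv (\<Omega> t (j + l)) ** \<eta> t (j + l)) - \<theta> t (j + k - l) ** matrix_inv (\<Omega> t (j + k)) ** \<gamma>2 t ** (matrix_inv (\<Omega> t (j + k)) ** \<eta> t (j + k))
        - Gf t (j + k - l) ** Hf t (j + k) + Gf t j ** Hf t (j + l)"
        using core_eq1[OF core[of t], of DGj j] z unfolding Gf_def Hf_def DHf_def by simp
      have "((\<lambda>s. Gf s j ** Hf s (j + k)) has_vector_derivative (Gf t j ** DHf (j + k) + DGj ** Hf t (j + k))) (at t)"
        by (rule mm_vd[OF dG dH])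
      moreover have "Gf t j ** DHf (j + k) + DGj ** Hf t (j + k) =
          q t (j + l - l) ** r t (j + l) - q t (j + k - l) ** r t (j + k)
          - g t (j + (k - l)) ** matrix_inv (g t (j + (k - l) + l))
          + g t j ** matrix_inv (g t (j + l))"
      proof -
        have idx: "j + l - l = j" "j + (k - l) = j + k - l" "j + k - l + l = j + k" by simp_all
        show ?thesis unfolding idx gg q_def r_def using c1 by (simp add: add.commute)
      qed
      ultimately show ?thesis unfolding gg by (rule has_vector_derivative_eq_rhs)
    qed
  qed
qed

end
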